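(* Let ${}^{n}\mathbf C$, ${}^{n+1}\mathbf C$ and ${}^{n}\mathbf C_{\mathrm i}$ be symmetric positive definite $3\times3$ real matrices. The matrix $\mathbf M:=\overline{({}^{n+1}\mathbf C)^{-1}\,{}^{n}\mathbf C}$ has positive real eigenvalues and is diagonalizable, so its principal square root $\mathbf F_{\mathrm{sh}}:=\mathbf M^{1/2}$ is well defined; put $${}^{\mathrm{est}}\mathbf C_{\mathrm i}:=\mathbf F_{\mathrm{sh}}^{-T}\,{}^{n}\mathbf C_{\mathrm i}\,\mathbf F_{\mathrm{sh}}^{-1}.$$ Then: (i) $\mathbf F_{\mathrm{sh}}^{-T}\,\overline{{}^{n}\mathbf C}\,\mathbf F_{\mathrm{sh}}^{-1}=\overline{{}^{n+1}\mathbf C}$, $\det\mathbf F_{\mathrm{sh}}=1$, and ${}^{\mathrm{est}}\mathbf C_{\mathrm i}$ is symmetric positive definite with $\det{}^{\mathrm{est}}\mathbf C_{\mathrm i}=\det{}^{n}\mathbf C_{\mathrm i}$; moreover ${}^{\mathrm{est}}\mathbf C_{\mathrm i}=(\overline{{}^{n+1}\mathbf C\,({}^{n}\mathbf C)^{-1}})^{1/2}\,{}^{n}\mathbf C_{\mathrm i}\,(\overline{({}^{n}\mathbf C)^{-1}\,{}^{n+1}\mathbf C})^{1/2}$. (ii) (Weak invariance) For every real $3\times3$ matrix $\mathbf F_0$ with $\det\mathbf F_0=1$, if ${}^{n}\mathbf C$, ${}^{n+1}\mathbf C$, ${}^{n}\mathbf C_{\mathrm i}$ are replaced by $\mathbf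 F_0^{-T}\,{}^{n}\mathbf C\,\mathbf F_0^{-1}$, $\mathbf F_0^{-T}\,{}^{n+1}\mathbf C\,\mathbf F_0^{-1}$, $\mathbf F_0^{-T}\,{}^{n}\mathbf C_{\mathrm i}\,\mathbf F_0^{-1}$, then the resulting estimate equals $\mathbf F_0^{-T}\,{}^{\mathrm{est}}\mathbf C_{\mathrm i}\,\mathbf F_0^{-1}$.
   Context: For a matrix $\mathbf M$ with $\det\mathbf M>0$, $\overline{\mathbf M}:=(\det\mathbf M)^{-1/3}\mathbf M$. The principal square root of a diagonalizable matrix with positive eigenvalues is the unique square root with positive eigenvalues. $\mathbf M^{-T}=(\mathbf M^{-1})^T$. *)

theory Defs
  imports "HOL-Analysis.Analysis"
begin

type_synonym mat3 = "real^3^3"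

definition is_eigenvalue :: "real^'n^'n \<Rightarrow> real \<Rightarrow> bool" where
  "is_eigenvalue A l \<longleftrightarrow> (\<exists>v. v \<noteq> 0 \<and> A *v v = l *\<^sub>R v)"

definition diagonal_mat :: "real^'n^'n \<Rightarrow> bool" where
  "diagonal_mat D \<longleftrightarrow> (\<forall>i j. i \<noteq> j \<longrightarrow> D $ i $ j = 0)"

definition real_diagonalizable :: "real^'n^'n \<Rightarrow> bool" where
  "real_diagonalizable A \<longleftrightarrow>
     (\<exists>(P::real^'n^'n) D. invertible P \<and> diagonal_mat D \<and> A = P ** D ** matrix_inv P)"

definition sym_posdef :: "real^'n^'n \<Rightarrow> bool" where
  "sym_posdef A \<longleftrightarrow> transpose A = A \<and> (\<forall>x. x \<noteq> 0 \<longrightarrow> x \<bullet> (A *v x) > 0)"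

text \<open>Unimodular part: \<open>(det M)^(-1/3) M\<close> (meant for \<open>det M > 0\<close>).\<close>
definition unimod :: "mat3 \<Rightarrow> mat3" where
  "unimod M = (det M) powr (-1/3) *\<^sub>R M"

text \<open>Principal square root: the unique square root all of whose eigenvalues
  are positive. (A real square root of a matrix with positive eigenvalues
  cannot have non-real eigenvalues, so restricting to real eigenvalues is harmless.)\<close>
definition psqrt :: "real^'n^'n \<Rightarrow> real^'n^'n" where
  "psqrt M = (THE S. S ** S = M \<and> (\<forall>l. is_eigenvalue S l \<longrightarrow> l > 0))"

definition est :: "mat3 \<Rightarrow> mat3 \<Rightarrow> mat3 \<Rightarrow> mat3" where
  "est C0 C1 Ci =
     (let F = psqrt (unimod (matrix_inv C1 ** C0))
      in transpose (matrix_inv F) ** Ci ** matrix_inv F)"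

end

theory Submission imports Defs begin
lemma quad_le0:
  fixes a b :: real
  assumes "\<And>t. a * t^2 + b * t \<le> 0"
  shows "b = 0"
proof (rule ccontr)
  assume b: "b \<noteq> 0"
  define c where "c = 2 * \<bar>a\<bar> + 2"
  have c: "c > 0" unfolding c_def using abs_ge_zero[of a] by linarith
  have ac: "a + c > 0" unfolding c_def using abs_ge_minus_self[of a] by linarith
  have h1: "a * (b/c)^2 + b * (b/c) \<le> 0" by (rule assms)
  have h2: "a * (b/c)^2 + b * (b/c) = (b^2) * (a + c) / (c*c)"
    using c by (simp add: power2_eq_square divide_simps) (simp add: algebra_simps)
  have "(b^2) * (a + c) / (c*c) > 0" using b c ac by (intro divide_pos_pos mult_pos_pos) (auto simp: not_square_less_zero)
  thus False using h1 h2 by linarith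
qed
lemma sym_inner:
  fixes A :: "real^'n^'n"
  assumes "transpose A = A"
  shows "(A *v x) \<bullet> y = x \<bullet> (A *v y)"
  by (metis assms dot_lmul_matrix transpose_matrix_vector)

lemma eig_exists:
  fixes A :: "real^'n^'n"
  assumes sym: "transpose A = A" and S: "subspace S" and inv: "\<And>x. x \<in> S \<Longrightarrow> A *v x \<in> S"
    and ne: "x0 \<in> S" "x0 \<noteq> 0"
  shows "\<exists>v\<in>S. norm v = 1 \<and> A *v v = (v \<bullet> (A *v v)) *\<^sub>R v"
proof -
  define K where "K = S \<inter> sphere 0 1"
  have cK: "compact K" unfolding K_def
    using S closed_subspace compact_sphere closed_Int_compact by blast
  have "(x0 /\<^sub>R norm x0) \<in> K" unfolding K_def using ne S
    by (simp add: subspace_scale)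
  hence neK: "K \<noteq> {}" by auto
  have cont: "continuous_on K (\<lambda>x. x \<bullet> (A *v x))"
    by (rule continuous_on_inner[OF continuous_on_id matrix_vector_mult_linear_continuous_on])
  obtain v where vK: "v \<in> K" and vmax: "\<And>y. y \<in> K \<Longrightarrow> y \<bullet> (A *v y) \<le> v \<bullet> (A *v v)"
    using continuous_attains_sup[OF cK neK cont] by auto
  define l where "l = v \<bullet> (A *v v)"
  have vS: "v \<in> S" and nv: "norm v = 1" using vK unfolding K_def by auto
  have vv: "v \<bullet> v = 1" using nv by (simp add: norm_eq_1)
  have orth: "(A *v v) \<bullet> y = 0" if yS: "y \<in> S" and yv: "v \<bullet> y = 0" for y
  proof -
    have "((y \<bullet> (A *v y)) - l * (y \<bullet> y)) * t^2 + (2 * ((A *v v) \<bullet> y)) * t \<le> 0" for t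
    proof -
      define w where "w = v + t *\<^sub>R y"
      have sy: "y \<bullet> (A *v v) = (A *v v) \<bullet> y" by (simp add: inner_commute)
      have sy2: "v \<bullet> (A *v y) = (A *v v) \<bullet> y" using sym_inner[OF sym, of v y] by simp
      have wS: "w \<in> S" unfolding w_def using vS yS S by (simp add: subspace_add subspace_scale)
      have ww: "w \<bullet> w = 1 + t^2 * (y \<bullet> y)" unfolding w_def
        using vv yv by (simp add: inner_add_left inner_add_right inner_commute power2_eq_square)
      have wpos: "w \<bullet> w > 0"
        using ww using inner_ge_zero[of y] by (simp add: add_pos_nonneg)
      hence nw: "norm w > 0" by (simp add: inner_gt_zero_iff)
      have "(w /\<^sub>R norm w) \<in> K" unfolding K_def using wS S nw by (simp add: subspace_scale)
      hence "(w /\<^sub>R norm w) \<bullet> (A *v (w /\<^sub>R norm w)) \<le> l" unfolding l_def by (rule vmax)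
      moreover have "(w /\<^sub>R norm w) \<bullet> (A *v (w /\<^sub>R norm w)) = (w \<bullet> (A *v w)) / (w \<bullet> w)"
        using nw by (simp add: matrix_vector_mult_scaleR power2_norm_eq_inner[symmetric] power2_eq_square) (simp add: field_simps)
      ultimately have "w \<bullet> (A *v w) \<le> l * (w \<bullet> w)" using wpos by (simp add: divide_le_eq)
      moreover have "w \<bullet> (A *v w) = l + 2 * t * ((A *v v) \<bullet> y) + t^2 * (y \<bullet> (A *v y))"
        unfolding w_def l_def
        by (simp add: matrix_vector_right_distrib matrix_vector_mult_scaleR inner_add_left inner_add_right
            sy sy2 power2_eq_square algebra_simps)
      ultimately show ?thesis using ww by (simp add: algebra_simps power2_eq_square)
    qed
    from quad_le0[OF this] show ?thesis by simp
  qed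
  define z where "z = A *v v - l *\<^sub>R v"
  have zS: "z \<in> S" unfolding z_def using vS inv S by (simp add: subspace_diff subspace_scale)
  have zv: "v \<bullet> z = 0" unfolding z_def l_def using vv by (simp add: inner_diff_right)
  have "(A *v v) \<bullet> z = 0" using orth[OF zS zv] .
  hence "z \<bullet> z = 0" using zv unfolding z_def by (simp add: inner_diff_left)
  hence "z = 0" by simp
  thus ?thesis using vS nv unfolding z_def l_def by auto
qed

lemma eig_basis:
  fixes A :: "real^'n^'n"
  assumes sym: "transpose A = A"
  shows "k \<le> CARD('n) \<Longrightarrow> \<exists>B. finite B \<and> card B = k \<and> (\<forall>b\<in>B. \<forall>c\<in>B. b \<noteq> c \<longrightarrow> b \<bullet> c = 0)
           \<and> (\<forall>b\<in>B. norm b = 1 \<and> A *v b = (b \<bullet> (A *v b)) *\<^sub>R b)"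
proof (induction k)
  case 0
  show ?case by (rule exI[of _ "{}"]) simp
next
  case (Suc k)
  then obtain B where fB: "finite B" and cB: "card B = k"
    and oB: "\<forall>b\<in>B. \<forall>c\<in>B. b \<noteq> c \<longrightarrow> b \<bullet> c = 0"
    and eB: "\<forall>b\<in>B. norm b = 1 \<and> A *v b = (b \<bullet> (A *v b)) *\<^sub>R b" by auto
  define S where "S = {x. \<forall>b\<in>B. b \<bullet> x = 0}"
  have sS: "subspace S" unfolding subspace_def S_def
    by (simp add: inner_add_right)
  have invS: "A *v x \<in> S" if "x \<in> S" for x
  proof -
    have "b \<bullet> (A *v x) = 0" if bB: "b \<in> B" for b
    proof -
      have "b \<bullet> (A *v x) = (A *v b) \<bullet> x" using sym_inner[OF sym, of b x] by simp
      also have "\<dots> = (b \<bullet> (A *v b)) * (b \<bullet> x)" using eB bB by (metis inner_scaleR_left)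
      also have "\<dots> = 0" using \<open>x \<in> S\<close> bB unfolding S_def by simp
      finally show ?thesis .
    qed
    thus ?thesis unfolding S_def by simp
  qed
  have "dim B \<le> card B" using fB by (simp add: dim_le_card')
  hence "dim B < DIM(real^'n)" using cB Suc.prems by simp
  then obtain a :: "real^'n" where a0: "a \<noteq> 0" and aB: "span B \<subseteq> {x. a \<bullet> x = 0}"
    using lowdim_subset_hyperplane by blast
  have aS: "a \<in> S" unfolding S_def using aB span_base by (fastforce simp: inner_commute)
  obtain v where vS: "v \<in> S" and nv: "norm v = 1" and ev: "A *v v = (v \<bullet> (A *v v)) *\<^sub>R v"
    using eig_exists[OF sym sS invS aS a0] by blast
  have vnB: "v \<notin> B"
  proof
    assume "v \<in> B"
    hence "v \<bullet> v = 0" using vS unfolding S_def by simp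
    thus False using nv by simp
  qed
  show ?case
  proof (intro exI[of _ "insert v B"] conjI)
    show "finite (insert v B)" using fB by simp
    show "card (insert v B) = Suc k" using fB cB vnB by simp
    show "\<forall>b\<in>insert v B. \<forall>c\<in>insert v B. b \<noteq> c \<longrightarrow> b \<bullet> c = 0"
      using oB vS unfolding S_def by (auto simp: inner_commute)
    show "\<forall>b\<in>insert v B. norm b = 1 \<and> A *v b = (b \<bullet> (A *v b)) *\<^sub>R b"
      using eB nv ev by auto
  qed
qed

definition diagm :: "('n \<Rightarrow> real) \<Rightarrow> real^'n^'n" where
  "diagm d = (\<chi> i j. if i = j then d i else 0)"

lemma spectral:
  fixes A :: "real^'n^'n"
  assumes sym: "transpose A = A"
  shows "\<exists>(P::real^'n^'n) d. transpose P ** P = mat 1 \<and> P ** transpose P = mat 1 \<and> A = P ** diagm d ** transpose P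
      \<and> (\<forall>j. \<exists>u. norm u = 1 \<and> d j = u \<bullet> (A *v u))"
proof -
  obtain B where fB: "finite B" and cB: "card B = CARD('n)"
    and oB: "\<forall>b\<in>B. \<forall>c\<in>B. b \<noteq> c \<longrightarrow> b \<bullet> c = 0"
    and eB: "\<forall>b\<in>B. norm b = 1 \<and> A *v b = (b \<bullet> (A *v b)) *\<^sub>R b"
    using eig_basis[OF sym, of "CARD('n)"] by auto
  obtain g where g: "bij_betw g (UNIV::'n set) B"
    using finite_same_card_bij[of "UNIV::'n set" B] fB cB by auto
  have gB: "g j \<in> B" for j using g by (auto simp: bij_betw_def)
  have ginj: "g i = g j \<Longrightarrow> i = j" for i j using g by (auto simp: bij_betw_def inj_on_def)
  define P :: "real^'n^'n" where "P = (\<chi> i j. g j $ i)"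
  define d where "d j = g j \<bullet> (A *v g j)" for j
  have PtP: "transpose P ** P = mat 1"
  proof -
    have "(transpose P ** P) $ i $ j = (if i = j then 1 else 0)" for i j
    proof -
      have "(transpose P ** P) $ i $ j = g i \<bullet> g j"
        by (simp add: P_def matrix_matrix_mult_def transpose_def inner_vec_def)
      also have "\<dots> = (if i = j then 1 else 0)"
      proof (cases "i = j")
        case True thus ?thesis using eB gB by (simp add: norm_eq_1)
      next
        case False hence "g i \<noteq> g j" using ginj by blast
        thus ?thesis using oB gB False by simp
      qed
      finally show ?thesis .
    qed
    thus ?thesis by (simp add: vec_eq_iff mat_def)
  qed
  hence PPt: "P ** transpose P = mat 1" using matrix_left_right_inverse by blast
  have AP: "A ** P = P ** diagm d"
  proof -
    have "(A ** P) $ i $ j = (P ** diagm d) $ i $ j" for i j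
    proof -
      have "(A ** P) $ i $ j = (A *v g j) $ i"
        by (simp add: P_def matrix_matrix_mult_def matrix_vector_mult_def)
      also have "\<dots> = d j * g j $ i"
      proof -
        have "A *v g j = d j *\<^sub>R g j" using eB gB[of j] unfolding d_def by blast
        thus ?thesis by simp
      qed
      also have "\<dots> = (P ** diagm d) $ i $ j"
        by (simp add: P_def diagm_def matrix_matrix_mult_def if_distrib if_distribR cong: if_cong)
      finally show ?thesis .
    qed
    thus ?thesis by (simp add: vec_eq_iff)
  qed
  have "A = A ** (P ** transpose P)" using PPt by simp
  also have "\<dots> = P ** diagm d ** transpose P" using AP by (simp add: matrix_mul_assoc)
  finally have "A = P ** diagm d ** transpose P" .
  moreover have "\<forall>j. \<exists>u. norm u = 1 \<and> d j = u \<bullet> (A *v u)"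
  proof
    fix j show "\<exists>u. norm u = 1 \<and> d j = u \<bullet> (A *v u)"
      using eB gB[of j] unfolding d_def by blast
  qed
  ultimately have X: "A = P ** diagm d ** transpose P \<and> (\<forall>j. \<exists>u. norm u = 1 \<and> d j = u \<bullet> (A *v u))"
    by (rule conjI)
  show ?thesis
    apply (rule exI[of _ P])
    apply (rule exI[of _ d])
    apply (rule conjI[OF PtP])
    apply (rule conjI[OF PPt])
    apply (rule X)
    done
qed

lemma minv_lr:
  fixes A :: "real^'n^'n"
  assumes "invertible A"
  shows "A ** matrix_inv A = mat 1" "matrix_inv A ** A = mat 1"
proof -
  have "\<exists>A'. A ** A' = mat 1 \<and> A' ** A = mat 1" using assms unfolding invertible_def by blast
  hence "A ** matrix_inv A = mat 1 \<and> matrix_inv A ** A = mat 1"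
    unfolding matrix_inv_def by (rule someI_ex)
  thus "A ** matrix_inv A = mat 1" "matrix_inv A ** A = mat 1" by auto
qed

lemma minv_eq:
  fixes A B :: "real^'n^'n"
  assumes "A ** B = mat 1"
  shows "matrix_inv A = B" "invertible A"
proof -
  have BA: "B ** A = mat 1" using assms matrix_left_right_inverse by blast
  show iA: "invertible A" unfolding invertible_def using assms BA by blast
  have "matrix_inv A = matrix_inv A ** (A ** B)" using assms by simp
  also have "\<dots> = (matrix_inv A ** A) ** B" by (simp add: matrix_mul_assoc)
  also have "\<dots> = B" using minv_lr(2)[OF iA] by simp
  finally show "matrix_inv A = B" .
qed

lemma invertible_minv:
  fixes A :: "real^'n^'n"
  assumes "invertible A"
  shows "invertible (matrix_inv A)" "matrix_inv (matrix_inv A) = A"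
  using minv_eq[OF minv_lr(2)[OF assms]] by auto

lemma minv_mult:
  fixes A B :: "real^'n^'n"
  assumes "invertible A" "invertible B"
  shows "matrix_inv (A ** B) = matrix_inv B ** matrix_inv A"
proof (rule minv_eq(1))
  have "A ** B ** (matrix_inv B ** matrix_inv A) = A ** (B ** matrix_inv B) ** matrix_inv A"
    by (simp add: matrix_mul_assoc)
  thus "A ** B ** (matrix_inv B ** matrix_inv A) = mat 1" using minv_lr[OF assms(1)] minv_lr[OF assms(2)] by simp
qed

lemma minv_transpose:
  fixes A :: "real^'n^'n"
  assumes "invertible A"
  shows "matrix_inv (transpose A) = transpose (matrix_inv A)" "invertible (transpose A)"
proof -
  have "transpose A ** transpose (matrix_inv A) = mat 1"
    using minv_lr(2)[OF assms] by (metis matrix_transpose_mul transpose_mat)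
  thus "matrix_inv (transpose A) = transpose (matrix_inv A)" "invertible (transpose A)"
    using minv_eq by auto
qed

lemma cancel_r:
  fixes A B X :: "real^'n^'n"
  assumes "A ** B = mat 1"
  shows "X ** A ** B = X"
  by (metis assms matrix_mul_assoc matrix_mul_rid)

lemma scaleR_mmult_left: "(c *\<^sub>R (A::real^'n^'m)) ** (B :: real^'p^'n) = c *\<^sub>R (A ** B)"
  by (simp add: vec_eq_iff matrix_matrix_mult_def sum_distrib_left mult.assoc)

lemma scaleR_mmult_right: "(A :: real^'n^'m) ** (c *\<^sub>R (B::real^'p^'n)) = c *\<^sub>R (A ** B)"
  by (simp add: vec_eq_iff matrix_matrix_mult_def sum_distrib_left mult.left_commute)

lemma transpose_scaleR: "transpose (c *\<^sub>R (A :: real^'n^'n)) = c *\<^sub>R transpose A"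
  by (simp add: vec_eq_iff transpose_def)

lemma det_scaleR: "det (c *\<^sub>R (A :: real^'n^'n)) = c ^ CARD('n) * det A"
proof -
  have "c *\<^sub>R A = (\<chi> i. (\<lambda>_. c) i *s A $ i)" by (simp add: vec_eq_iff)
  hence "det (c *\<^sub>R A) = prod (\<lambda>_. c) (UNIV::'n set) * det ((\<chi> i. A $ i) :: real^'n^'n)"
    using det_rows_mul[of "\<lambda>_. c" "\<lambda>i. A $ i"] by simp
  thus ?thesis by simp
qed

lemma diagm_mv: "diagm d *v x = (\<chi> i. d i * x $ i)"
proof -
  have "(diagm d *v x) $ i = d i * x $ i" for i
  proof -
    have "(diagm d *v x) $ i = (\<Sum>j\<in>UNIV. (if i = j then d i * x $ j else 0))"
      by (simp add: diagm_def matrix_vector_mult_def if_distrib if_distribR cong: if_cong)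
    also have "\<dots> = d i * x $ i" by simp
    finally show ?thesis .
  qed
  thus ?thesis by (simp add: vec_eq_iff)
qed

lemma diagm_mult: "diagm a ** diagm b = diagm (\<lambda>i. a i * b i)"
proof -
  have "(diagm a ** diagm b) $ i $ j = diagm (\<lambda>i. a i * b i) $ i $ j" for i j
  proof -
    have "(diagm a ** diagm b) $ i $ j = (\<Sum>k\<in>UNIV. diagm a $ i $ k * diagm b $ k $ j)"
      by (simp add: matrix_matrix_mult_def)
    also have "\<dots> = (\<Sum>k\<in>UNIV. (if k = i then (if i = j then a i * b i else 0) else 0))"
      by (rule sum.cong) (auto simp: diagm_def)
    also have "\<dots> = diagm (\<lambda>i. a i * b i) $ i $ j" by (simp add: diagm_def)
    finally show ?thesis .
  qed
  thus ?thesis by (simp add: vec_eq_iff)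
qed

lemma diagm_mult_r: "X ** diagm a ** diagm b = X ** diagm (\<lambda>i. a i * b i)"
  by (metis diagm_mult matrix_mul_assoc)

lemma diagm_const: "diagm (\<lambda>_. c) = c *\<^sub>R mat 1"
  by (simp add: vec_eq_iff diagm_def mat_def)

lemma diagm_transpose: "transpose (diagm d) = diagm d"
  by (simp add: vec_eq_iff diagm_def transpose_def)

lemma det_diagm: "det (diagm d :: real^'n^'n) = prod d UNIV"
  by (subst det_diagonal) (auto simp: diagm_def)

lemma diagonal_diagm: "diagonal_mat (diagm d)"
  by (simp add: diagonal_mat_def diagm_def)

lemma diagm_axis: "diagm d *v axis j 1 = d j *\<^sub>R axis j 1"
  by (simp add: diagm_mv vec_eq_iff axis_def)

lemma eq_from_axis:
  fixes A B :: "real^'n^'n"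
  assumes "\<And>j. A *v axis j 1 = B *v axis j 1"
  shows "A = B"
proof -
  have "column j A = column j B" for j using assms[of j] by (simp add: matrix_vector_mult_basis)
  thus ?thesis by (simp add: vec_eq_iff column_def)
qed

lemma eig_sim:
  fixes P :: "real^'n^'n"
  assumes inv: "invertible P" and ev: "is_eigenvalue (P ** diagm d ** matrix_inv P) l"
  shows "\<exists>i. l = d i"
proof -
  obtain v where v0: "v \<noteq> 0" and Mv: "(P ** diagm d ** matrix_inv P) *v v = l *\<^sub>R v"
    using ev unfolding is_eigenvalue_def by blast
  define w where "w = matrix_inv P *v v"
  have Pw: "P *v w = v" unfolding w_def using minv_lr(1)[OF inv] by (simp add: matrix_vector_mul_assoc)
  have w0: "w \<noteq> 0" using Pw v0 by auto
  have "diagm d *v w = matrix_inv P *v (P *v (diagm d *v w))"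
    using minv_lr(2)[OF inv] by (simp add: matrix_vector_mul_assoc[of "matrix_inv P" P])
  also have "\<dots> = matrix_inv P *v ((P ** diagm d ** matrix_inv P) *v v)"
    unfolding w_def by (simp add: matrix_vector_mul_assoc matrix_mul_assoc)
  also have "\<dots> = l *\<^sub>R w" unfolding w_def using Mv by (simp add: matrix_vector_mult_scaleR)
  finally have dw: "diagm d *v w = l *\<^sub>R w" .
  obtain i where wi: "w $ i \<noteq> 0" using w0 by (auto simp: vec_eq_iff)
  have "d i * w $ i = l * w $ i" using dw by (simp add: diagm_mv vec_eq_iff)
  hence "l = d i" using wi by simp
  thus ?thesis by blast
qed

lemma sim_mult:
  fixes P :: "real^'n^'n"
  assumes inv: "invertible P"
  shows "(P ** diagm a ** matrix_inv P) ** (P ** diagm b ** matrix_inv P) = P ** diagm (\<lambda>i. a i * b i) ** matrix_inv P"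
proof -
  have "(P ** diagm a ** matrix_inv P) ** (P ** diagm b ** matrix_inv P)
      = (P ** diagm a ** (matrix_inv P ** P)) ** diagm b ** matrix_inv P"
    by (simp add: matrix_mul_assoc)
  also have "\<dots> = P ** diagm (\<lambda>i. a i * b i) ** matrix_inv P"
    using minv_lr(2)[OF inv] by (simp add: diagm_mult_r)
  finally show ?thesis .
qed

lemma sim_axis:
  fixes P :: "real^'n^'n"
  assumes inv: "invertible P"
  shows "(P ** diagm d ** matrix_inv P) *v (P *v axis j 1) = d j *\<^sub>R (P *v axis j 1)"
proof -
  have "(P ** diagm d ** matrix_inv P) *v (P *v axis j 1) = P *v (diagm d *v ((matrix_inv P ** P) *v axis j 1))"
    by (simp add: matrix_vector_mul_assoc matrix_mul_assoc)
  also have "\<dots> = d j *\<^sub>R (P *v axis j 1)"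
    using minv_lr(2)[OF inv] by (simp add: diagm_axis matrix_vector_mult_scaleR)
  finally show ?thesis .
qed

lemma psqrt_sim:
  fixes P :: "real^'n^'n"
  assumes inv: "invertible P" and pos: "\<And>i. d i > 0"
  defines "S \<equiv> P ** diagm (\<lambda>i. sqrt (d i)) ** matrix_inv P"
  shows "S ** S = P ** diagm d ** matrix_inv P"
    and "\<forall>l. is_eigenvalue S l \<longrightarrow> l > 0"
    and "\<forall>S'. S' ** S' = P ** diagm d ** matrix_inv P \<and> (\<forall>l. is_eigenvalue S' l \<longrightarrow> l > 0) \<longrightarrow> S' = S"
    and "psqrt (P ** diagm d ** matrix_inv P) = S"
proof -
  define M where "M = P ** diagm d ** matrix_inv P"
  have sq: "sqrt (d i) * sqrt (d i) = d i" for i using pos[of i] by simp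
  show SS: "S ** S = P ** diagm d ** matrix_inv P"
    unfolding S_def sim_mult[OF inv] sq ..
  show ep: "\<forall>l. is_eigenvalue S l \<longrightarrow> l > 0"
  proof (intro allI impI)
    fix l assume "is_eigenvalue S l"
    then obtain i where "l = sqrt (d i)" using eig_sim[OF inv] unfolding S_def by blast
    thus "l > 0" using pos[of i] by simp
  qed
  have uniq: "S' = S" if S'M: "S' ** S' = M" and S'e: "\<forall>l. is_eigenvalue S' l \<longrightarrow> l > 0" for S'
  proof -
    have col: "S' *v (P *v axis j 1) = sqrt (d j) *\<^sub>R (P *v axis j 1)" for j
    proof -
      define t where "t = P *v axis j 1"
      define w where "w = S' *v t - sqrt (d j) *\<^sub>R t"
      have Mt: "M *v t = d j *\<^sub>R t" unfolding M_def t_def by (rule sim_axis[OF inv])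
      have "S' *v w = (S' ** S') *v t - sqrt (d j) *\<^sub>R (S' *v t)"
        unfolding w_def by (simp add: matrix_vector_mult_diff_distrib matrix_vector_mult_scaleR matrix_vector_mul_assoc)
      also have "\<dots> = (- sqrt (d j)) *\<^sub>R w"
        unfolding w_def using S'M Mt sq[of j] by (simp add: algebra_simps)
      finally have Sw: "S' *v w = (- sqrt (d j)) *\<^sub>R w" .
      have "w = 0"
      proof (rule ccontr)
        assume "w \<noteq> 0"
        hence "is_eigenvalue S' (- sqrt (d j))" unfolding is_eigenvalue_def using Sw by blast
        hence "- sqrt (d j) > 0" using S'e by blast
        thus False using pos[of j] by simp
      qed
      thus ?thesis unfolding w_def t_def by simp
    qed
    have colS: "S *v (P *v axis j 1) = sqrt (d j) *\<^sub>R (P *v axis j 1)" for j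
      unfolding S_def by (rule sim_axis[OF inv])
    have "S' ** P = S ** P"
      by (rule eq_from_axis) (simp add: col colS flip: matrix_vector_mul_assoc)
    hence "S' ** P ** matrix_inv P = S ** P ** matrix_inv P" by simp
    thus "S' = S" using cancel_r[OF minv_lr(1)[OF inv]] by simp
  qed
  thus "\<forall>S'. S' ** S' = P ** diagm d ** matrix_inv P \<and> (\<forall>l. is_eigenvalue S' l \<longrightarrow> l > 0) \<longrightarrow> S' = S"
    unfolding M_def by blast
  show "psqrt (P ** diagm d ** matrix_inv P) = S"
    unfolding psqrt_def
  proof (rule the_equality)
    show "S ** S = P ** diagm d ** matrix_inv P \<and> (\<forall>l. is_eigenvalue S l \<longrightarrow> l > 0)" using SS ep by blast
  next
    fix S' assume "S' ** S' = P ** diagm d ** matrix_inv P \<and> (\<forall>l. is_eigenvalue S' l \<longrightarrow> l > 0)"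
    thus "S' = S" using uniq unfolding M_def by blast
  qed
qed

lemma det_sim:
  fixes T :: "real^'n^'n"
  assumes inv: "invertible T"
  shows "det (T ** diagm d ** matrix_inv T) = prod d UNIV"
proof -
  have "det T * det (matrix_inv T) = det (T ** matrix_inv T)" by (simp add: det_mul)
  also have "\<dots> = 1" using minv_lr(1)[OF inv] by simp
  finally have "det T * det (matrix_inv T) = 1" .
  thus ?thesis by (simp add: det_mul det_diagm)
qed

lemma scale_sim: "c *\<^sub>R ((T::real^'n^'n) ** diagm d ** Ti) = T ** diagm (\<lambda>i. c * d i) ** Ti"
proof -
  have "c *\<^sub>R diagm d = diagm (\<lambda>i. c * d i)" by (simp add: vec_eq_iff diagm_def)
  moreover have "c *\<^sub>R (T ** diagm d ** Ti) = T ** (c *\<^sub>R diagm d) ** Ti"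
    by (simp only: scaleR_mmult_left scaleR_mmult_right)
  ultimately show ?thesis by simp
qed

lemma inv_sim:
  fixes T :: "real^'n^'n"
  assumes inv: "invertible T" and nz: "\<And>i. d i \<noteq> 0"
  shows "matrix_inv (T ** diagm d ** matrix_inv T) = T ** diagm (\<lambda>i. 1 / d i) ** matrix_inv T"
    "invertible (T ** diagm d ** matrix_inv T)"
proof -
  have "(T ** diagm d ** matrix_inv T) ** (T ** diagm (\<lambda>i. 1 / d i) ** matrix_inv T) = T ** diagm (\<lambda>_. 1) ** matrix_inv T"
    unfolding sim_mult[OF inv] using nz by simp
  also have "\<dots> = mat 1" using minv_lr(1)[OF inv] by (simp add: diagm_const)
  finally show "matrix_inv (T ** diagm d ** matrix_inv T) = T ** diagm (\<lambda>i. 1 / d i) ** matrix_inv T"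
    "invertible (T ** diagm d ** matrix_inv T)" using minv_eq by auto
qed

lemma transpose_sim:
  fixes T :: "real^'n^'n"
  assumes inv: "invertible T"
  shows "transpose (T ** diagm d ** matrix_inv T) = transpose (matrix_inv T) ** diagm d ** matrix_inv (transpose (matrix_inv T))"
    "invertible (transpose (matrix_inv T))"
proof -
  have "matrix_inv (transpose (matrix_inv T)) = transpose T"
    using minv_transpose[OF invertible_minv(1)[OF inv]] invertible_minv(2)[OF inv] by simp
  thus "transpose (T ** diagm d ** matrix_inv T) = transpose (matrix_inv T) ** diagm d ** matrix_inv (transpose (matrix_inv T))"
    by (simp add: matrix_transpose_mul diagm_transpose matrix_mul_assoc)
  show "invertible (transpose (matrix_inv T))"
    using minv_transpose[OF invertible_minv(1)[OF inv]] by simp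
qed

lemma spd_diag:
  fixes C :: "real^'n^'n"
  assumes "sym_posdef C"
  shows "\<exists>(P::real^'n^'n) d. invertible P \<and> matrix_inv P = transpose P \<and> C = P ** diagm d ** matrix_inv P \<and> (\<forall>i. d i > 0)"
proof -
  have sym: "transpose C = C" and pd: "\<And>x. x \<noteq> 0 \<Longrightarrow> x \<bullet> (C *v x) > 0"
    using assms unfolding sym_posdef_def by auto
  obtain P :: "real^'n^'n" and d where PtP: "transpose P ** P = mat 1" and PPt: "P ** transpose P = mat 1"
    and C: "C = P ** diagm d ** transpose P" and dd: "\<forall>j. \<exists>u. norm u = 1 \<and> d j = u \<bullet> (C *v u)"
    using spectral[OF sym] by blast
  have mi: "matrix_inv P = transpose P" "invertible P" using minv_eq[OF PPt] by auto
  have "d i > 0" for i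
  proof -
    obtain u where "norm u = 1" "d i = u \<bullet> (C *v u)" using dd by blast
    thus ?thesis using pd[of u] by (cases "u = 0") auto
  qed
  hence pos: "\<forall>i. d i > 0" by blast
  show ?thesis
    apply (rule exI[of _ P], rule exI[of _ d])
    using mi C pos by simp
qed

lemma spd_sqrt:
  fixes C :: "real^'n^'n"
  assumes "sym_posdef C"
  shows "\<exists>(R::real^'n^'n) (Ri::real^'n^'n). R ** R = C \<and> R ** Ri = mat 1 \<and> Ri ** R = mat 1 \<and> transpose R = R \<and> transpose Ri = Ri"
proof -
  obtain P :: "real^'n^'n" and d where iP: "invertible P" and mP: "matrix_inv P = transpose P"
    and C: "C = P ** diagm d ** matrix_inv P" and pos: "\<forall>i. d i > 0"
    using spd_diag[OF assms] by blast
  define R where "R = P ** diagm (\<lambda>i. sqrt (d i)) ** matrix_inv P"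
  define Ri where "Ri = P ** diagm (\<lambda>i. 1 / sqrt (d i)) ** matrix_inv P"
  have e1: "(\<lambda>i. sqrt (d i) * (1 / sqrt (d i))) = (\<lambda>_. 1)" "(\<lambda>i. 1 / sqrt (d i) * sqrt (d i)) = (\<lambda>_. 1)"
  proof -
    have nz: "sqrt (d i) \<noteq> 0" for i using pos by (metis less_irrefl real_sqrt_eq_zero_cancel_iff)
    show "(\<lambda>i. sqrt (d i) * (1 / sqrt (d i))) = (\<lambda>_. 1)" "(\<lambda>i. 1 / sqrt (d i) * sqrt (d i)) = (\<lambda>_. 1)"
      using nz by (simp_all add: fun_eq_iff)
  qed
  have "R ** R = C" unfolding R_def C using psqrt_sim(1)[OF iP] pos by blast
  moreover have "R ** Ri = mat 1" "Ri ** R = mat 1"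
    unfolding R_def Ri_def sim_mult[OF iP] e1 diagm_const using minv_lr(1)[OF iP]
    by simp_all
  moreover have "transpose R = R" "transpose Ri = Ri"
    unfolding R_def Ri_def mP by (simp_all add: matrix_transpose_mul diagm_transpose matrix_mul_assoc)
  ultimately show ?thesis by blast
qed

lemma cube_powr:
  fixes p :: real
  assumes "p > 0"
  shows "(p powr (-1/3)) ^ 3 * p = 1"
proof -
  have "(p powr (-1/3)) ^ 3 = p powr (-1)" using assms by (simp add: powr_power)
  thus ?thesis using assms by (simp add: powr_minus_divide)
qed

lemma unimod_sim:
  fixes T :: mat3
  assumes inv: "invertible T"
  shows "unimod (T ** diagm lam ** matrix_inv T) = T ** diagm (\<lambda>i. (prod lam UNIV) powr (-1/3) * lam i) ** matrix_inv T"
  unfolding unimod_def det_sim[OF inv] scale_sim ..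

lemma scal_lemma:
  fixes d0 d1 :: real
  assumes "d1 > 0" "d0 > 0"
  shows "d0 powr (-1/3) * (1 / ((d0 / d1) powr (-1/3))) = d1 powr (-1/3)"
proof -
  have "d0 = (d0 / d1) * d1" using assms by simp
  hence "d0 powr (-1/3) = (d0 / d1) powr (-1/3) * d1 powr (-1/3)" by (metis powr_mult)
  moreover have "(d0 / d1) powr (-1/3) > 0" using assms by simp
  ultimately show ?thesis by simp
qed

lemma inv_powr: "(p::real) > 0 \<Longrightarrow> (1 / p) powr (-1/3) = 1 / (p powr (-1/3))"
  by (simp add: powr_divide)

theorem mainTheorem7:
  fixes C0 C1 Ci :: mat3
  assumes "sym_posdef C0" and "sym_posdef C1" and "sym_posdef Ci"
  defines "M \<equiv> unimod (matrix_inv C1 ** C0)"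
  defines "F \<equiv> psqrt M"
  defines "E \<equiv> transpose (matrix_inv F) ** Ci ** matrix_inv F"
  shows "det (matrix_inv C1 ** C0) > 0
    \<and> real_diagonalizable M \<and> (\<forall>l. is_eigenvalue M l \<longrightarrow> l > 0)
    \<and> F ** F = M \<and> (\<forall>l. is_eigenvalue F l \<longrightarrow> l > 0)
    \<and> (\<forall>S. S ** S = M \<and> (\<forall>l. is_eigenvalue S l \<longrightarrow> l > 0) \<longrightarrow> S = F)
    \<and> E = est C0 C1 Ci
    \<and> transpose (matrix_inv F) ** unimod C0 ** matrix_inv F = unimod C1
    \<and> det F = 1
    \<and> sym_posdef E \<and> det E = det Ci
    \<and> E = psqrt (unimod (C1 ** matrix_inv C0)) ** Ci ** psqrt (unimod (matrix_inv C0 ** C1))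
    \<and> (\<forall>F0 :: mat3. det F0 = 1 \<longrightarrow>
         est (transpose (matrix_inv F0) ** C0 ** matrix_inv F0)
             (transpose (matrix_inv F0) ** C1 ** matrix_inv F0)
             (transpose (matrix_inv F0) ** Ci ** matrix_inv F0)
         = transpose (matrix_inv F0) ** E ** matrix_inv F0)"
proof -
  have symC0: "transpose C0 = C0" and pdC0: "\<And>x. x \<noteq> 0 \<Longrightarrow> x \<bullet> (C0 *v x) > 0"
    using assms(1) unfolding sym_posdef_def by auto
  have symCi: "transpose Ci = Ci" and pdCi: "\<And>x. x \<noteq> 0 \<Longrightarrow> x \<bullet> (Ci *v x) > 0"
    using assms(3) unfolding sym_posdef_def by auto
  obtain R Ri :: mat3 where RR: "R ** R = C1" and RRi: "R ** Ri = mat 1" and RiR: "Ri ** R = mat 1"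
    and tR: "transpose R = R" and tRi: "transpose Ri = Ri"
    using spd_sqrt[OF assms(2)] by blast
  have C1R: "C1 ** (Ri ** Ri) = mat 1"
    unfolding RR[symmetric] by (simp add: matrix_mul_assoc cancel_r[OF RRi] RRi)
  have iC1: "matrix_inv C1 = Ri ** Ri" and invC1: "invertible C1" using minv_eq[OF C1R] by auto
  define N where "N = Ri ** C0 ** Ri"
  have spdN: "sym_posdef N"
    unfolding sym_posdef_def
  proof (intro conjI allI impI)
    show "transpose N = N" unfolding N_def by (simp add: matrix_transpose_mul tRi symC0 matrix_mul_assoc)
  next
    fix x :: "real^3" assume x0: "x \<noteq> 0"
    have "R *v (Ri *v x) = x" using RRi by (simp add: matrix_vector_mul_assoc)
    hence y0: "Ri *v x \<noteq> 0" using x0 by auto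
    have "x \<bullet> (N *v x) = x \<bullet> (Ri *v (C0 *v (Ri *v x)))" unfolding N_def by (simp add: matrix_vector_mul_assoc matrix_mul_assoc)
    also have "\<dots> = (Ri *v x) \<bullet> (C0 *v (Ri *v x))" using sym_inner[OF tRi] by simp
    also have "\<dots> > 0" using pdC0[OF y0] .
    finally show "x \<bullet> (N *v x) > 0" .
  qed
  obtain Q :: mat3 and lam where iQ: "invertible Q" and mQ: "matrix_inv Q = transpose Q"
    and Neq: "N = Q ** diagm lam ** matrix_inv Q" and lampos: "\<forall>i. lam i > 0"
    using spd_diag[OF spdN] by blast
  have QQt: "Q ** transpose Q = mat 1" and QtQ: "transpose Q ** Q = mat 1"
    using minv_lr[OF iQ] mQ by auto
  have C0eq: "C0 = R ** N ** R"
    unfolding N_def by (simp add: matrix_mul_assoc RRi cancel_r[OF RiR])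
  define T where "T = Ri ** Q"
  have TTi: "T ** (transpose Q ** R) = mat 1"
    unfolding T_def by (simp add: matrix_mul_assoc cancel_r[OF QQt] RiR)
  have mT: "matrix_inv T = transpose Q ** R" and iT: "invertible T" using minv_eq[OF TTi] by auto
  have Xeq: "matrix_inv C1 ** C0 = T ** diagm lam ** matrix_inv T"
    unfolding iC1 C0eq Neq mT unfolding T_def mQ by (simp add: matrix_mul_assoc cancel_r[OF RiR])
  define p where "p = prod lam UNIV"
  have ppos: "p > 0" unfolding p_def using lampos by (simp add: prod_pos)
  have detX: "det (matrix_inv C1 ** C0) = p" unfolding Xeq det_sim[OF iT] p_def ..
  have f1: "det (matrix_inv C1 ** C0) > 0" using detX ppos by simp
  define c where "c = p powr (-1/3)"
  have cpos: "c > 0" unfolding c_def using ppos by simp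
  define mu where "mu = (\<lambda>i. c * lam i)"
  have mupos: "\<And>i. mu i > 0" unfolding mu_def using cpos lampos by simp
  have Meq: "M = T ** diagm mu ** matrix_inv T"
    unfolding M_def Xeq unimod_sim[OF iT] mu_def c_def p_def ..
  define s where "s = (\<lambda>i. sqrt (mu i))"
  have spos: "\<And>i. s i > 0" unfolding s_def using mupos by simp
  have Feq: "F = T ** diagm s ** matrix_inv T"
    unfolding F_def Meq s_def by (rule psqrt_sim(4)[OF iT mupos])
  have f2: "real_diagonalizable M" unfolding real_diagonalizable_def Meq
    using iT diagonal_diagm minv_lr by blast
  have f3: "\<forall>l. is_eigenvalue M l \<longrightarrow> l > 0"
  proof (intro allI impI)
    fix l assume "is_eigenvalue M l"
    then obtain i where "l = mu i" using eig_sim[OF iT] unfolding Meq by blast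
    thus "l > 0" using mupos by simp
  qed
  have f4: "F ** F = M" unfolding Feq Meq s_def by (rule psqrt_sim(1)[OF iT mupos])
  have f5: "\<forall>l. is_eigenvalue F l \<longrightarrow> l > 0" unfolding Feq s_def by (rule psqrt_sim(2)[OF iT mupos])
  have f6: "\<forall>S. S ** S = M \<and> (\<forall>l. is_eigenvalue S l \<longrightarrow> l > 0) \<longrightarrow> S = F"
    unfolding Feq Meq s_def by (rule psqrt_sim(3)[OF iT mupos])
  define Fi where "Fi = T ** diagm (\<lambda>i. 1 / s i) ** matrix_inv T"
  have snz: "s i \<noteq> 0" for i using spos[of i] by simp
  have mF: "matrix_inv F = Fi" and iF: "invertible F"
    unfolding Feq Fi_def using inv_sim[OF iT snz] by auto
  have FFi: "F ** Fi = mat 1" using minv_lr(1)[OF iF] mF by simp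
  have Eeq: "E = transpose Fi ** Ci ** Fi" unfolding E_def mF ..
  have f7: "E = est C0 C1 Ci" unfolding E_def F_def M_def est_def Let_def ..
  have prodmu: "prod mu UNIV = 1"
  proof -
    have "prod mu UNIV = c ^ 3 * p" unfolding mu_def p_def by (simp add: prod.distrib)
    also have "\<dots> = 1" unfolding c_def by (rule cube_powr[OF ppos])
    finally show ?thesis .
  qed
  have prods: "prod s UNIV = 1"
  proof -
    have "(prod s UNIV) ^ 2 = prod (\<lambda>i. s i ^ 2) UNIV" by (simp add: prod_power_distrib)
    also have "\<dots> = prod mu UNIV" unfolding s_def using mupos by (simp add: less_imp_le)
    finally have "(prod s UNIV) ^ 2 = 1" using prodmu by simp
    moreover have "prod s UNIV > 0" using spos by (simp add: prod_pos)
    ultimately show ?thesis using power2_eq_1_iff[of "prod s UNIV"] by auto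
  qed
  have f9: "det F = 1" unfolding Feq det_sim[OF iT] prods ..
  have detFi: "det Fi = 1"
  proof -
    have "det F * det Fi = det (F ** Fi)" by (simp add: det_mul)
    hence "det F * det Fi = 1" using FFi by simp
    thus ?thesis using f9 by simp
  qed
  have f10: "sym_posdef E"
    unfolding sym_posdef_def
  proof (intro conjI allI impI)
    show "transpose E = E" unfolding Eeq by (simp add: matrix_transpose_mul symCi matrix_mul_assoc)
  next
    fix x :: "real^3" assume x0: "x \<noteq> 0"
    have "F *v (Fi *v x) = x" using FFi by (simp add: matrix_vector_mul_assoc)
    hence y0: "Fi *v x \<noteq> 0" using x0 by auto
    have "x \<bullet> (E *v x) = x \<bullet> (transpose Fi *v (Ci *v (Fi *v x)))" unfolding Eeq
      by (simp add: matrix_vector_mul_assoc matrix_mul_assoc)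
    also have "\<dots> = (Fi *v x) \<bullet> (Ci *v (Fi *v x))"
    proof -
      have "x v* transpose Fi = Fi *v x" using transpose_matrix_vector[of "transpose Fi" x] by simp
      thus ?thesis using dot_lmul_matrix[of x "transpose Fi"] by simp
    qed
    also have "\<dots> > 0" using pdCi[OF y0] .
    finally show "x \<bullet> (E *v x) > 0" .
  qed
  have f11: "det E = det Ci" unfolding Eeq by (simp add: det_mul detFi)
  have symC1: "transpose C1 = C1" using assms(2) unfolding sym_posdef_def by auto
  have FiE: "Fi = Ri ** Q ** diagm (\<lambda>i. 1 / s i) ** transpose Q ** R"
    unfolding Fi_def mT unfolding T_def by (simp add: matrix_mul_assoc)
  have tFiE: "transpose Fi = R ** Q ** diagm (\<lambda>i. 1 / s i) ** transpose Q ** Ri"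
    unfolding FiE by (simp add: matrix_transpose_mul diagm_transpose tR tRi matrix_mul_assoc)
  have K1: "transpose Fi ** C0 ** Fi = R ** Q ** diagm (\<lambda>i. 1 / s i * lam i * (1 / s i)) ** transpose Q ** R"
    unfolding tFiE unfolding FiE C0eq Neq mQ
    by (simp only: matrix_mul_assoc cancel_r[OF RiR] cancel_r[OF RRi] cancel_r[OF QtQ] diagm_mult_r)
  have dg: "(\<lambda>i. 1 / s i * lam i * (1 / s i)) = (\<lambda>_. 1 / c)"
  proof
    fix i
    have ss: "s i * s i = c * lam i" unfolding s_def mu_def using mupos[of i] unfolding mu_def
      by (simp add: less_imp_le)
    have "1 / s i * lam i * (1 / s i) = lam i / (s i * s i)" by simp
    also have "\<dots> = 1 / c" unfolding ss using lampos cpos by (simp add: less_imp_neq[symmetric])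
    finally show "1 / s i * lam i * (1 / s i) = 1 / c" .
  qed
  have K2: "transpose Fi ** C0 ** Fi = (1 / c) *\<^sub>R C1"
  proof -
    have "transpose Fi ** C0 ** Fi = R ** Q ** ((1 / c) *\<^sub>R mat 1) ** transpose Q ** R"
      unfolding K1 dg diagm_const ..
    also have "\<dots> = (1 / c) *\<^sub>R (R ** Q ** transpose Q ** R)"
      by (simp add: scaleR_mmult_left scaleR_mmult_right)
    also have "\<dots> = (1 / c) *\<^sub>R C1" using RR by (simp add: cancel_r[OF QQt])
    finally show ?thesis .
  qed
  have detR: "det R * det Ri = 1"
  proof -
    have "det R * det Ri = det (R ** Ri)" by (simp add: det_mul)
    thus ?thesis using RRi by simp
  qed
  have dC1: "det C1 > 0"
  proof -
    have "det C1 = det R * det R" using RR by (metis det_mul)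
    moreover have "det R \<noteq> 0" using detR by auto
    ultimately show ?thesis using not_real_square_gt_zero[of "det R"] by argo
  qed
  have dC1i: "det (matrix_inv C1) * det C1 = 1"
  proof -
    have "det (matrix_inv C1) * det C1 = det (matrix_inv C1 ** C1)" by (simp add: det_mul)
    thus ?thesis using minv_lr(2)[OF invC1] by simp
  qed
  have pC: "p = det C0 / det C1"
  proof -
    have "p = det (matrix_inv C1) * det C0" using detX by (simp add: det_mul)
    thus ?thesis using dC1i dC1 by (simp add: field_simps)
  qed
  have dC0: "det C0 > 0"
  proof -
    have "det C0 = p * det C1" using pC dC1 by simp
    thus ?thesis using ppos dC1 by simp
  qed
  have f8: "transpose (matrix_inv F) ** unimod C0 ** matrix_inv F = unimod C1"
  proof -
    have "transpose Fi ** unimod C0 ** Fi = (det C0 powr (-1/3)) *\<^sub>R (transpose Fi ** C0 ** Fi)"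
      unfolding unimod_def by (simp add: scaleR_mmult_left scaleR_mmult_right)
    also have "\<dots> = (det C0 powr (-1/3) * (1 / c)) *\<^sub>R C1" unfolding K2 by simp
    also have "det C0 powr (-1/3) * (1 / c) = det C1 powr (-1/3)"
      unfolding c_def pC by (rule scal_lemma[OF dC1 dC0])
    finally show ?thesis unfolding mF unimod_def .
  qed
  have invC0: "invertible C0" using dC0 by (simp add: invertible_det_nz)
  have lnz: "lam i \<noteq> 0" for i using lampos by (metis less_irrefl)
  have Yeq: "matrix_inv C0 ** C1 = T ** diagm (\<lambda>i. 1 / lam i) ** matrix_inv T"
  proof -
    have "matrix_inv (matrix_inv C1 ** C0) = matrix_inv C0 ** matrix_inv (matrix_inv C1)"
      by (rule minv_mult[OF invertible_minv(1)[OF invC1] invC0])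
    also have "\<dots> = matrix_inv C0 ** C1" using invertible_minv(2)[OF invC1] by simp
    finally have "matrix_inv C0 ** C1 = matrix_inv (matrix_inv C1 ** C0)" ..
    also have "\<dots> = T ** diagm (\<lambda>i. 1 / lam i) ** matrix_inv T"
      unfolding Xeq by (rule inv_sim(1)[OF iT lnz])
    finally show ?thesis .
  qed
  have pinv: "prod (\<lambda>i. 1 / lam i) UNIV = 1 / p" unfolding p_def by (simp add: prod_dividef)
  have imupos: "\<And>i. 1 / mu i > 0" using mupos by simp
  have uY: "unimod (matrix_inv C0 ** C1) = T ** diagm (\<lambda>i. 1 / mu i) ** matrix_inv T"
  proof -
    have "(\<lambda>i. (prod (\<lambda>i. 1 / lam i) UNIV) powr (-1/3) * (1 / lam i)) = (\<lambda>i. 1 / mu i)"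
      unfolding pinv inv_powr[OF ppos] c_def[symmetric] mu_def by simp
    thus ?thesis unfolding Yeq unimod_sim[OF iT] by simp
  qed
  have sq1: "(\<lambda>i. sqrt (1 / mu i)) = (\<lambda>i. 1 / s i)" unfolding s_def by (simp add: real_sqrt_divide)
  have psY: "psqrt (unimod (matrix_inv C0 ** C1)) = Fi"
    unfolding uY psqrt_sim(4)[OF iT imupos] sq1 Fi_def ..
  have tY: "C1 ** matrix_inv C0 = transpose (matrix_inv C0 ** C1)"
    using minv_transpose(1)[OF invC0] symC0 symC1 by (simp add: matrix_transpose_mul)
  have uZ: "unimod (C1 ** matrix_inv C0) = transpose (unimod (matrix_inv C0 ** C1))"
    unfolding tY unimod_def by (simp add: transpose_scaleR)
  define T' where "T' = transpose (matrix_inv T)"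
  have iT': "invertible T'" unfolding T'_def by (rule transpose_sim(2)[OF iT])
  have psZ: "psqrt (unimod (C1 ** matrix_inv C0)) = transpose Fi"
  proof -
    have "psqrt (unimod (C1 ** matrix_inv C0)) = psqrt (T' ** diagm (\<lambda>i. 1 / mu i) ** matrix_inv T')"
      unfolding uZ uY transpose_sim(1)[OF iT] T'_def ..
    also have "\<dots> = T' ** diagm (\<lambda>i. 1 / s i) ** matrix_inv T'"
      unfolding psqrt_sim(4)[OF iT' imupos] sq1 ..
    also have "\<dots> = transpose Fi" unfolding Fi_def transpose_sim(1)[OF iT] T'_def ..
    finally show ?thesis .
  qed
  have f12: "E = psqrt (unimod (C1 ** matrix_inv C0)) ** Ci ** psqrt (unimod (matrix_inv C0 ** C1))"
    unfolding psY psZ Eeq ..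
  have f13: "\<forall>F0 :: mat3. det F0 = 1 \<longrightarrow>
         est (transpose (matrix_inv F0) ** C0 ** matrix_inv F0)
             (transpose (matrix_inv F0) ** C1 ** matrix_inv F0)
             (transpose (matrix_inv F0) ** Ci ** matrix_inv F0)
         = transpose (matrix_inv F0) ** E ** matrix_inv F0"
  proof (intro allI impI)
    fix F0 :: mat3 assume dF0: "det F0 = 1"
    have iF0: "invertible F0" using dF0 by (simp add: invertible_det_nz)
    define G where "G = matrix_inv F0"
    have F0G: "F0 ** G = mat 1" and GF0: "G ** F0 = mat 1" unfolding G_def using minv_lr[OF iF0] by auto
    have tGF: "transpose F0 ** transpose G = mat 1" using GF0 by (metis matrix_transpose_mul transpose_mat)
    have tFG: "transpose G ** transpose F0 = mat 1" using F0G by (metis matrix_transpose_mul transpose_mat)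
    have C1C1i: "C1 ** matrix_inv C1 = mat 1" by (rule minv_lr(1)[OF invC1])
    have "(transpose G ** C1 ** G) ** (F0 ** matrix_inv C1 ** transpose F0) = mat 1"
      by (simp add: matrix_mul_assoc cancel_r[OF GF0] cancel_r[OF C1C1i] tFG)
    hence mC1': "matrix_inv (transpose G ** C1 ** G) = F0 ** matrix_inv C1 ** transpose F0"
      by (rule minv_eq(1))
    define T2 where "T2 = F0 ** T"
    have "T2 ** (matrix_inv T ** G) = mat 1"
      unfolding T2_def by (simp add: matrix_mul_assoc cancel_r[OF minv_lr(1)[OF iT]] F0G)
    hence mT2: "matrix_inv T2 = matrix_inv T ** G" and iT2: "invertible T2" using minv_eq by auto
    have X': "matrix_inv (transpose G ** C1 ** G) ** (transpose G ** C0 ** G) = T2 ** diagm lam ** matrix_inv T2"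
    proof -
      have "matrix_inv (transpose G ** C1 ** G) ** (transpose G ** C0 ** G) = F0 ** (matrix_inv C1 ** C0) ** G"
        unfolding mC1' by (simp add: matrix_mul_assoc cancel_r[OF tGF])
      also have "\<dots> = T2 ** diagm lam ** matrix_inv T2"
        unfolding Xeq mT2 unfolding T2_def by (simp add: matrix_mul_assoc)
      finally show ?thesis .
    qed
    have M': "unimod (matrix_inv (transpose G ** C1 ** G) ** (transpose G ** C0 ** G)) = T2 ** diagm mu ** matrix_inv T2"
      unfolding X' unimod_sim[OF iT2] mu_def c_def p_def ..
    have F': "psqrt (T2 ** diagm mu ** matrix_inv T2) = T2 ** diagm s ** matrix_inv T2"
      unfolding s_def by (rule psqrt_sim(4)[OF iT2 mupos])
    have mF': "matrix_inv (T2 ** diagm s ** matrix_inv T2) = F0 ** Fi ** G"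
      unfolding inv_sim(1)[OF iT2 snz] unfolding mT2 unfolding Fi_def T2_def by (simp add: matrix_mul_assoc)
    have "est (transpose G ** C0 ** G) (transpose G ** C1 ** G) (transpose G ** Ci ** G)
        = transpose (F0 ** Fi ** G) ** (transpose G ** Ci ** G) ** (F0 ** Fi ** G)"
      unfolding est_def Let_def M' F' mF' ..
    also have "\<dots> = transpose G ** (transpose Fi ** Ci ** Fi) ** G"
      by (simp add: matrix_transpose_mul matrix_mul_assoc cancel_r[OF tGF] cancel_r[OF GF0])
    also have "\<dots> = transpose G ** E ** G" unfolding Eeq ..
    finally show "est (transpose (matrix_inv F0) ** C0 ** matrix_inv F0)
             (transpose (matrix_inv F0) ** C1 ** matrix_inv F0)
             (transpose (matrix_inv F0) ** Ci ** matrix_inv F0)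
         = transpose (matrix_inv F0) ** E ** matrix_inv F0" unfolding G_def .
  qed
  show ?thesis
    apply (intro conjI)
    apply (rule f1) apply (rule f2) apply (rule f3) apply (rule f4) apply (rule f5) apply (rule f6)
    apply (rule f7) apply (rule f8) apply (rule f9) apply (rule f10) apply (rule f11) apply (rule f12)
    apply (rule f13)
    done
qed

end
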